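(* The cut rule is admissible: every sequent derivable using the rules (id), ($\land$), ($\lor$), ($\Box$), ($\Diamond$) and (cut) is derivable using only (id), ($\land$), ($\lor$), ($\Box$), ($\Diamond$).
   Context: Fix a countable set of atoms; each atom $\alpha$ has a dual negative atom $\alpha^\perp$. Formulas: $A,B ::= \alpha \mid \alpha^\perp \mid A\land B \mid A\lor B \mid \Box A \mid \Diamond A$. Negation $A^\perp$: $(\alpha)^\perp=\alpha^\perp$, $(\alpha^\perp)^\perp=\alpha$, $(A\land B)^\perp=A^\perp\lor B^\perp$, $(A\lor B)^\perp=A^\perp\land B^\perp$, $(\Box A)^\perp=\Diamond A^\perp$, $(\Diamond A)^\perp=\Box A^\perp$. A (nested) sequent is given by $\Gamma,\Delta ::= \cdot \mid \Gamma, A \mid \Gamma, [\Delta]$, where $\cdot$ is the empty sequent; sequents are taken up to exchange, and $\Gamma,\Delta$ denotes juxtaposition. A unary context is given by $\Gamma\{-\} ::= \Delta,\{-\} \mid \Delta,[\Gamma\{-\}]$; $\Gamma\{\Delta\}$ is the result of filling the hole with $\Delta$, and $\Gamma\{\}$ means $\Gamma\{\cdot\}$. Depth: $\mathrm{depth}(\Delta,\{-\})=0$, $\mathrm{depth}(\Delta,[\Gamma\{-\}])=\mathrm{depth}(\Gamma\{-\})+1$. Rules: (id) $\Gamma\{\alpha^\perp,\alpha\}$ with no premises ($\alpha$ an atom); ($\land$) from $\Gamma\{A\}$ and $\Gamma\{B\}$ infer $\Gamma\{A\land B\}$; ($\lor$) from $\Gamma\{A,B\}$ infer $\Gamma\{A\lor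 B\}$; ($\Box$) from $\Gamma\{[\Diamond A^\perp, A]\}$ infer $\Gamma\{\Box A\}$; ($\Diamond$) from $\Gamma\{\Delta\{A\},\Diamond A\}$ infer $\Gamma\{\Delta\{\},\Diamond A\}$, provided $\mathrm{depth}(\Delta\{-\})>0$; (cut) from $\Gamma\{A\}$ and $\Gamma\{A^\perp\}$ infer $\Gamma\{\}$. *)

theory Defs
  imports "HOL-Library.Multiset"
begin

datatype fm = Atm nat | NAtm nat | And fm fm | Or fm fm | Box fm | Dia fm

primrec neg :: "fm \<Rightarrow> fm" where
  "neg (Atm a) = NAtm a"
| "neg (NAtm a) = Atm a"
| "neg (And A B) = Or (neg A) (neg B)"
| "neg (Or A B) = And (neg A) (neg B)"
| "neg (Box A) = Dia (neg A)"
| "neg (Dia A) = Box (neg A)"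

(* A nested sequent is a multiset (sequents are taken up to exchange) of items,
   each item being a formula or a bracketed nested sequent [Delta]. *)
datatype item = F fm | Br "item multiset"

type_synonym sequent = "item multiset"

(* Unary contexts: Delta,{-}  |  Delta,[Gamma{-}] *)
datatype ctx = Hole sequent | Nest sequent ctx

primrec fill :: "ctx \<Rightarrow> sequent \<Rightarrow> sequent" where
  "fill (Hole D) X = D + X"
| "fill (Nest D G) X = D + {# Br (fill G X) #}"

primrec depth :: "ctx \<Rightarrow> nat" where
  "depth (Hole D) = 0"
| "depth (Nest D G) = Suc (depth G)"

inductive deriv :: "bool \<Rightarrow> sequent \<Rightarrow> bool" for c :: bool where
  idR:  "deriv c (fill G {# F (NAtm a), F (Atm a) #})"
| andR: "deriv c (fill G {# F A #}) \<Longrightarrow> deriv c (fill G {# F B #})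
          \<Longrightarrow> deriv c (fill G {# F (And A B) #})"
| orR:  "deriv c (fill G {# F A, F B #}) \<Longrightarrow> deriv c (fill G {# F (Or A B) #})"
| boxR: "deriv c (fill G {# Br {# F (Dia (neg A)), F A #} #})
          \<Longrightarrow> deriv c (fill G {# F (Box A) #})"
| diaR: "depth D > 0 \<Longrightarrow> deriv c (fill G (fill D {# F A #} + {# F (Dia A) #}))
          \<Longrightarrow> deriv c (fill G (fill D {#} + {# F (Dia A) #}))"
| cutR: "c \<Longrightarrow> deriv c (fill G {# F A #}) \<Longrightarrow> deriv c (fill G {# F (neg A) #})
          \<Longrightarrow> deriv c (fill G {#})"

abbreviation derivable_with_cut :: "sequent \<Rightarrow> bool" where
  "derivable_with_cut \<Gamma> \<equiv> deriv True \<Gamma>"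

abbreviation derivable_cut_free :: "sequent \<Rightarrow> bool" where
  "derivable_cut_free \<Gamma> \<equiv> deriv False \<Gamma>"

end

theory Submission
  imports Defs
begin

lemma mem_size_lt: "z \<in># D \<Longrightarrow> f z < size_multiset f D"
proof -
  assume "z \<in># D"
  then have "D = add_mset z (D - {#z#})" by simp
  then have "size_multiset f D = Suc (f z) + size_multiset f (D - {#z#})"
    by (metis size_multiset_add_mset)
  then show ?thesis by simp
qed

section \<open>Semantics\<close>

primrec sat :: "('w \<Rightarrow> 'w \<Rightarrow> bool) \<Rightarrow> ('w \<Rightarrow> nat \<Rightarrow> bool) \<Rightarrow> 'w \<Rightarrow> fm \<Rightarrow> bool" where
  "sat R V w (Atm a) = V w a"
| "sat R V w (NAtm a) = (\<not> V w a)"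
| "sat R V w (And A B) = (sat R V w A \<and> sat R V w B)"
| "sat R V w (Or A B) = (sat R V w A \<or> sat R V w B)"
| "sat R V w (Box A) = (\<forall>v. R w v \<longrightarrow> sat R V v A)"
| "sat R V w (Dia A) = (\<exists>v. R w v \<and> sat R V v A)"

lemma sat_neg[simp]: "sat R V w (neg A) = (\<not> sat R V w A)"
  by (induction A arbitrary: w) auto

lemma neg_neg[simp]: "neg (neg A) = A"
  by (induction A) auto

inductive fls :: "('w \<Rightarrow> 'w \<Rightarrow> bool) \<Rightarrow> ('w \<Rightarrow> nat \<Rightarrow> bool) \<Rightarrow> 'w \<Rightarrow> sequent \<Rightarrow> bool"
  for R V where
  "(\<forall>A. F A \<in># G \<longrightarrow> \<not> sat R V w A) \<Longrightarrow> (\<forall>D. Br D \<in># G \<longrightarrow> (\<exists>v. R w v \<and> fls R V v D))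
   \<Longrightarrow> fls R V w G"

lemma fls_iff: "fls R V w G \<longleftrightarrow> (\<forall>A. F A \<in># G \<longrightarrow> \<not> sat R V w A) \<and> (\<forall>D. Br D \<in># G \<longrightarrow> (\<exists>v. R w v \<and> fls R V v D))"
  by (auto elim: fls.cases intro: fls.intros)

lemma fls_plus[simp]: "fls R V w (A + B) \<longleftrightarrow> fls R V w A \<and> fls R V w B"
  by (auto elim!: fls.cases intro!: fls.intros)

lemma fls_empty[simp]: "fls R V w {#}"
  by (auto intro!: fls.intros)

lemma fls_F1: "fls R V w {#F A#} \<longleftrightarrow> \<not> sat R V w A"
  by (auto elim: fls.cases intro!: fls.intros)

lemma fls_Br1: "fls R V w {#Br D#} \<longleftrightarrow> (\<exists>v. R w v \<and> fls R V v D)"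
  by (auto elim: fls.cases intro!: fls.intros)

lemma fls_F[simp]: "fls R V w (add_mset (F A) G) \<longleftrightarrow> \<not> sat R V w A \<and> fls R V w G"
  using fls_plus[of R V w "{#F A#}" G] fls_F1[of R V w A] by simp

lemma fls_Br[simp]: "fls R V w (add_mset (Br D) G) \<longleftrightarrow> (\<exists>v. R w v \<and> fls R V v D) \<and> fls R V w G"
  using fls_plus[of R V w "{#Br D#}" G] fls_Br1[of R V w D] by simp

lemma fill_path:
  assumes tr: "\<forall>x y z. R x y \<longrightarrow> R y z \<longrightarrow> R x z"
  shows "fls R V w (fill G X) \<Longrightarrow> \<exists>u. fls R V u X \<and> (\<forall>Y. fls R V u Y \<longrightarrow> fls R V w (fill G Y))
     \<and> (depth G = 0 \<longrightarrow> u = w) \<and> (0 < depth G \<longrightarrow> R w u)"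
proof (induction G arbitrary: w)
  case (Hole D)
  then show ?case by auto
next
  case (Nest D G)
  then obtain v where v: "R w v" "fls R V v (fill G X)" "fls R V w D" by auto
  from Nest.IH[OF v(2)] obtain u where "fls R V u X \<and> (\<forall>Y. fls R V u Y \<longrightarrow> fls R V v (fill G Y))
    \<and> (depth G = 0 \<longrightarrow> u = v) \<and> (0 < depth G \<longrightarrow> R v u)" by (rule exE)
  then have u: "fls R V u X" "\<forall>Y. fls R V u Y \<longrightarrow> fls R V v (fill G Y)"
    "depth G = 0 \<longrightarrow> u = v" "0 < depth G \<longrightarrow> R v u" by auto
  have "R w u" using u(3,4) v(1) tr by (cases "depth G") blast+
  then show ?case using u v by auto
qed

definition GL :: "('w \<Rightarrow> 'w \<Rightarrow> bool) \<Rightarrow> bool" where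
  "GL R \<longleftrightarrow> (\<forall>x y z. R x y \<longrightarrow> R y z \<longrightarrow> R x z) \<and> wf {(y,x). R x y}"

theorem soundness:
  assumes "deriv c G" "GL R"
  shows "\<not> fls R V w G"
proof -
  have tr: "\<forall>x y z. R x y \<longrightarrow> R y z \<longrightarrow> R x z" using assms(2) unfolding GL_def by blast
  have wf: "wf {(y,x). R x y}" using assms(2) unfolding GL_def by blast
  show ?thesis using assms(1) 
  proof (induction arbitrary: w)
  case (idR G a)
  show ?case
  proof
    assume "fls R V w (fill G {#F (NAtm a), F (Atm a)#})"
    from fill_path[OF tr this] obtain u where "fls R V u {#F (NAtm a), F (Atm a)#}" by blast
    then show False by auto
  qed
next
  case (andR G A B)
  show ?case
  proof
    assume "fls R V w (fill G {#F (And A B)#})"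
    from fill_path[OF tr this] obtain u where u: "fls R V u {#F (And A B)#}"
      "\<forall>Y. fls R V u Y \<longrightarrow> fls R V w (fill G Y)" by blast
    from u(1) have "\<not>sat R V u A \<or> \<not>sat R V u B" by simp
    then show False using andR.IH u(2)[rule_format, of "{#F A#}"] u(2)[rule_format, of "{#F B#}"] by auto
  qed
next
  case (orR G A B)
  show ?case
  proof
    assume "fls R V w (fill G {#F (Or A B)#})"
    from fill_path[OF tr this] obtain u where u: "fls R V u {#F (Or A B)#}"
      "\<forall>Y. fls R V u Y \<longrightarrow> fls R V w (fill G Y)" by blast
    then show False using orR.IH u(2)[rule_format, of "{#F A, F B#}"] by auto
  qed
next
  case (boxR G A)
  show ?case
  proof
    assume "fls R V w (fill G {#F (Box A)#})"
    from fill_path[OF tr this] obtain u where u: "fls R V u {#F (Box A)#}"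
      "\<forall>Y. fls R V u Y \<longrightarrow> fls R V w (fill G Y)" by blast
    then obtain v0 where v0: "R u v0" "\<not> sat R V v0 A" by auto
    have "v0 \<in> {v. R u v \<and> \<not> sat R V v A}" using v0 by auto
    from wfE_min[OF wf this] obtain v where v: "R u v" "\<not> sat R V v A"
      "\<And>y. R v y \<Longrightarrow> \<not> (R u y \<and> \<not> sat R V y A)" by auto
    have "\<not> sat R V v (Dia (neg A))" using v tr by auto
    then have "fls R V u {#Br {#F (Dia (neg A)), F A#}#}" using v by auto
    then show False using u(2)[rule_format, of "{#Br {#F (Dia (neg A)), F A#}#}"] boxR.IH by auto
  qed
next
  case (diaR D G A)
  show ?case
  proof
    assume "fls R V w (fill G (fill D {#} + {#F (Dia A)#}))"
    from fill_path[OF tr this] obtain u where u: "fls R V u (fill D {#})" "\<not> sat R V u (Dia A)"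
      "\<forall>Y. fls R V u Y \<longrightarrow> fls R V w (fill G Y)" by auto
    from fill_path[OF tr u(1)] obtain z where z: "\<forall>Y. fls R V z Y \<longrightarrow> fls R V u (fill D Y)" "R u z"
      using diaR.hyps by blast
    have "fls R V z {#F A#}" using z u(2) by auto
    then have "fls R V u (fill D {#F A#})" using z(1) by blast
    then have "fls R V u (fill D {#F A#} + {#F (Dia A)#})" using u(2) by simp
    then show False using u(3)[rule_format, of "fill D {#F A#} + {#F (Dia A)#}"] diaR.IH by blast
  qed
next
  case (cutR G A)
  show ?case
  proof
    assume "fls R V w (fill G {#})"
    from fill_path[OF tr this] obtain u where u: 
      "\<forall>Y. fls R V u Y \<longrightarrow> fls R V w (fill G Y)" by blast
    show False
    proof (cases "sat R V u A")
      case True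
      then show False using u[rule_format, of "{#F (neg A)#}"] cutR.IH(2) by auto
    next
      case False
      then show False using u[rule_format, of "{#F A#}"] cutR.IH(1) by auto
    qed
  qed
  qed
qed

section \<open>Contexts and zippers\<close>

fun plug :: "sequent list \<Rightarrow> sequent \<Rightarrow> sequent" where
  "plug [] N = N"
| "plug (E # Es) N = plug Es (E + {#Br N#})"

lemma plug_append[simp]: "plug (xs @ ys) N = plug ys (plug xs N)"
  by (induction xs arbitrary: N) auto

primrec addtop :: "sequent \<Rightarrow> ctx \<Rightarrow> ctx" where
  "addtop D (Hole E) = Hole (D + E)"
| "addtop D (Nest E G) = Nest (D + E) G"

primrec comp :: "ctx \<Rightarrow> ctx \<Rightarrow> ctx" where
  "comp (Hole D) H = addtop D H"
| "comp (Nest D G) H = Nest D (comp G H)"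

lemma fill_addtop[simp]: "fill (addtop D H) X = D + fill H X"
  by (cases H) (auto simp: ac_simps)

lemma fill_comp[simp]: "fill (comp G H) X = fill G (fill H X)"
  by (induction G) auto

fun toctx :: "sequent list \<Rightarrow> sequent \<Rightarrow> ctx" where
  "toctx [] M = Hole M"
| "toctx (E # Es) M = comp (toctx Es E) (Nest {#} (Hole M))"

lemma fill_toctx[simp]: "fill (toctx Es M) X = plug Es (M + X)"
  by (induction Es arbitrary: M X) auto

lemma genid: "deriv c (fill G {#F A, F (neg A)#})"
proof (induction A arbitrary: G)
  case (Atm a)
  have "deriv c (fill G {#F (NAtm a), F (Atm a)#})" by (rule idR)
  then show ?case by (simp add: add_mset_commute)
next
  case (NAtm a)
  show ?case using idR[of c G a] by simp
next
  case (And A B)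
  have 1: "deriv c (fill G {#F A, F (neg A), F (neg B)#})"
    using And.IH(1)[of "comp G (Hole {#F (neg B)#})"] by (simp add: add_mset_commute)
  have 2: "deriv c (fill G {#F B, F (neg A), F (neg B)#})"
    using And.IH(2)[of "comp G (Hole {#F (neg A)#})"] by (simp add: add_mset_commute)
  have "deriv c (fill (comp G (Hole {#F (neg A), F (neg B)#})) {#F (And A B)#})"
    by (rule andR) (use 1 2 in \<open>simp_all add: add_mset_commute\<close>)
  then have "deriv c (fill (comp G (Hole {#F (And A B)#})) {#F (neg A), F (neg B)#})"
    by (simp add: add_mset_commute)
  then have "deriv c (fill (comp G (Hole {#F (And A B)#})) {#F (Or (neg A) (neg B))#})"
    by (rule orR)
  then show ?case by (simp add: add_mset_commute)
next
  case (Or A B)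
  have 1: "deriv c (fill G {#F (neg A), F A, F B#})"
    using Or.IH(1)[of "comp G (Hole {#F B#})"] by (simp add: add_mset_commute)
  have 2: "deriv c (fill G {#F (neg B), F A, F B#})"
    using Or.IH(2)[of "comp G (Hole {#F A#})"] by (simp add: add_mset_commute)
  have "deriv c (fill (comp G (Hole {#F A, F B#})) {#F (And (neg A) (neg B))#})"
    by (rule andR) (use 1 2 in \<open>simp_all add: add_mset_commute\<close>)
  then have "deriv c (fill (comp G (Hole {#F (And (neg A) (neg B))#})) {#F A, F B#})"
    by (simp add: add_mset_commute)
  then have "deriv c (fill (comp G (Hole {#F (And (neg A) (neg B))#})) {#F (Or A B)#})"
    by (rule orR)
  then show ?case by (simp add: add_mset_commute)
next
  case (Box A)
  let ?D = "Nest {#} (Hole {#F (Dia (neg A)), F A#})"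
  have "deriv c (fill G (fill ?D {#F (neg A)#} + {#F (Dia (neg A))#}))"
    using Box.IH[of "comp G (Nest {#F (Dia (neg A))#} (Hole {#F (Dia (neg A))#}))"]
    by (simp add: add_mset_commute)
  then have "deriv c (fill G (fill ?D {#} + {#F (Dia (neg A))#}))"
    by (rule diaR[rotated]) simp
  then have "deriv c (fill (comp G (Hole {#F (Dia (neg A))#})) {#Br {#F (Dia (neg A)), F A#}#})"
    by (simp add: add_mset_commute)
  then have "deriv c (fill (comp G (Hole {#F (Dia (neg A))#})) {#F (Box A)#})"
    by (rule boxR)
  then show ?case by (simp add: add_mset_commute)
next
  case (Dia A)
  let ?D = "Nest {#} (Hole {#F (Dia A), F (neg A)#})"
  have "deriv c (fill G (fill ?D {#F A#} + {#F (Dia A)#}))"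
    using Dia.IH[of "comp G (Nest {#F (Dia A)#} (Hole {#F (Dia A)#}))"]
    by (simp add: add_mset_commute)
  then have "deriv c (fill G (fill ?D {#} + {#F (Dia A)#}))"
    by (rule diaR[rotated]) simp
  then have "deriv c (fill (comp G (Hole {#F (Dia A)#})) {#Br {#F (Dia (neg (neg A))), F (neg A)#}#})"
    by (simp add: add_mset_commute)
  then have "deriv c (fill (comp G (Hole {#F (Dia A)#})) {#F (Box (neg A))#})"
    by (rule boxR)
  then show ?case by (simp add: add_mset_commute)
qed

lemma dia_push:
  assumes "E \<in> set Es" "F (Dia B) \<in># E" "deriv c (plug Es (N + {#F B#}))"
  shows "deriv c (plug Es N)"
proof -
  obtain Es1 Es2 where Es: "Es = Es1 @ E # Es2" using assms(1) split_list by metis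
  obtain E' where E: "E = add_mset (F (Dia B)) E'" using assms(2) by (metis multi_member_split)
  let ?D = "Nest {#} (toctx Es1 N)"
  have "deriv c (fill (toctx Es2 E') (fill ?D {#F B#} + {#F (Dia B)#}))"
    using assms(3) by (simp add: Es E add_mset_commute)
  then have "deriv c (fill (toctx Es2 E') (fill ?D {#} + {#F (Dia B)#}))"
    by (rule diaR[rotated]) simp
  then show ?thesis by (simp add: Es E add_mset_commute)
qed

section \<open>Coverage and saturation\<close>

primrec cvS :: "sequent \<Rightarrow> fm \<Rightarrow> bool" where
  "cvS N (Atm a) = (F (Atm a) \<in># N)"
| "cvS N (NAtm a) = (F (NAtm a) \<in># N)"
| "cvS N (And A B) = (F (And A B) \<in># N \<or> cvS N A \<or> cvS N B)"
| "cvS N (Or A B) = (F (Or A B) \<in># N \<or> (cvS N A \<and> cvS N B))"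
| "cvS N (Box A) = (F (Box A) \<in># N \<or> (\<exists>D. Br D \<in># N \<and> cvS D A))"
| "cvS N (Dia A) = (F (Dia A) \<in># N)"

definition scv :: "sequent \<Rightarrow> fm \<Rightarrow> bool" where
  "scv N X = (case X of And A B \<Rightarrow> cvS N A \<or> cvS N B | Or A B \<Rightarrow> cvS N A \<and> cvS N B
      | Box A \<Rightarrow> (\<exists>D. Br D \<in># N \<and> cvS D A) | _ \<Rightarrow> True)"

lemma cv_mem: "F X \<in># N \<Longrightarrow> cvS N X"
  by (cases X) auto

definition nodeOK :: "sequent list \<Rightarrow> sequent \<Rightarrow> bool" where
  "nodeOK Es N \<longleftrightarrow> (\<forall>X. F X \<in># N \<longrightarrow> scv N X) \<and> (\<forall>a. \<not>(F (Atm a) \<in># N \<and> F (NAtm a) \<in># N))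
     \<and> (\<forall>E B. E \<in> set Es \<longrightarrow> F (Dia B) \<in># E \<longrightarrow> cvS N B)"

definition saturated :: "sequent \<Rightarrow> bool" where
  "saturated G \<longleftrightarrow> (\<forall>Es N. plug Es N = G \<longrightarrow> nodeOK Es N)"

definition R0 :: "(sequent list \<times> sequent) \<Rightarrow> (sequent list \<times> sequent) \<Rightarrow> bool" where
  "R0 x y \<longleftrightarrow> (\<exists>Esx. Esx \<noteq> [] \<and> fst y = Esx @ fst x \<and> plug Esx (snd y) = snd x)"

definition V0 :: "(sequent list \<times> sequent) \<Rightarrow> nat \<Rightarrow> bool" where
  "V0 x a \<longleftrightarrow> F (NAtm a) \<in># snd x"

lemma size_plug_le: "size (Br N) \<le> size (Br (plug Es N))"
proof (induction Es arbitrary: N)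
  case Nil
  then show ?case by simp
next
  case (Cons E Es)
  have "size (Br N) < size (Br (E + {#Br N#}))"
    using mem_size_lt[of "Br N" "E + {#Br N#}" size] by simp
  then show ?case using Cons.IH[of "E + {#Br N#}"] by simp
qed

lemma size_plug_lt: "Esx \<noteq> [] \<Longrightarrow> size (Br N) < size (Br (plug Esx N))"
proof (cases Esx)
  case (Cons E Es)
  have "size (Br N) < size (Br (E + {#Br N#}))"
    using mem_size_lt[of "Br N" "E + {#Br N#}" size] by simp
  then show ?thesis using size_plug_le[of "E + {#Br N#}" Es] Cons by simp
qed simp

lemma GL_R0: "GL R0"
  unfolding GL_def
proof
  show "\<forall>x y z. R0 x y \<longrightarrow> R0 y z \<longrightarrow> R0 x z"
    unfolding R0_def by (metis Nil_is_append_conv append_assoc plug_append)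
  have "{(y,x). R0 x y} \<subseteq> measure (\<lambda>x. size (Br (snd x)))"
    unfolding R0_def using size_plug_lt by fastforce
  then show "wf {(y,x). R0 x y}" using wf_subset by blast
qed

lemma anc_mem: "Esx \<noteq> [] \<Longrightarrow> plug Esx N' = N \<Longrightarrow> F X \<in># N \<Longrightarrow> \<exists>E\<in>set Esx. F X \<in># E"
proof (induction Esx arbitrary: N')
  case Nil
  then show ?case by simp
next
  case (Cons E Es)
  show ?case
  proof (cases "Es = []")
    case True
    then show ?thesis using Cons.prems by auto
  next
    case False
    then show ?thesis using Cons.IH[of "E + {#Br N'#}"] Cons.prems by auto
  qed
qed

lemma truth:
  assumes sat: "saturated G"
  shows "plug Es N = G \<Longrightarrow> cvS N X \<Longrightarrow> \<not> sat R0 V0 (Es,N) X"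
proof (induction X arbitrary: Es N)
  case (Atm a)
  then have "nodeOK Es N" using sat saturated_def by blast
  then show ?case using Atm by (auto simp: nodeOK_def V0_def)
next
  case (NAtm a)
  then show ?case by (auto simp: V0_def)
next
  case (And A B)
  then have "nodeOK Es N" using sat saturated_def by blast
  then have "cvS N A \<or> cvS N B" using And.prems by (auto simp: nodeOK_def scv_def)
  then show ?case using And by auto
next
  case (Or A B)
  then have "nodeOK Es N" using sat saturated_def by blast
  then have "cvS N A \<and> cvS N B" using Or.prems by (auto simp: nodeOK_def scv_def)
  then show ?case using Or by auto
next
  case (Box A)
  then have "nodeOK Es N" using sat saturated_def by blast
  then have ok: "\<forall>X. F X \<in># N \<longrightarrow> scv N X" by (simp add: nodeOK_def)
  have "\<exists>D. Br D \<in># N \<and> cvS D A"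
  proof (cases "F (Box A) \<in># N")
    case True
    then have "scv N (Box A)" using ok by blast
    then show ?thesis by (simp add: scv_def)
  next
    case False
    then show ?thesis using Box.prems by simp
  qed
  then obtain D where D: "Br D \<in># N" "cvS D A" by blast
  have pl: "plug ((N - {#Br D#}) # Es) D = G" using D(1) Box.prems by simp
  have "R0 (Es,N) ((N - {#Br D#}) # Es, D)" unfolding R0_def using D(1)
    by (auto intro!: exI[of _ "[N - {#Br D#}]"])
  then show ?case using Box.IH[OF pl D(2)] by auto
next
  case (Dia A)
  have mem: "F (Dia A) \<in># N" using Dia.prems by simp
  show ?case
  proof
    assume "sat R0 V0 (Es, N) (Dia A)"
    then obtain y where y: "R0 (Es,N) y" "sat R0 V0 y A" by auto
    then obtain Esx where Ex: "Esx \<noteq> []" "fst y = Esx @ Es" "plug Esx (snd y) = N" 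
      unfolding R0_def by auto
    have pl: "plug (fst y) (snd y) = G" using Ex Dia.prems by simp
    then have ok: "nodeOK (fst y) (snd y)" using sat saturated_def by blast
    obtain E where "E \<in> set Esx" "F (Dia A) \<in># E" using anc_mem[OF Ex(1) Ex(3) mem] by blast
    then have "cvS (snd y) A" using ok Ex(2) by (auto simp: nodeOK_def)
    then show False using Dia.IH[OF pl] y(2) by (cases y) auto
  qed
qed

lemma sat_root:
  assumes sat: "saturated G"
  shows "\<forall>Es. plug Es N = G \<longrightarrow> fls R0 V0 (Es,N) N"
proof -
  have "\<And>i. (case i of Br N \<Rightarrow> \<forall>Es. plug Es N = G \<longrightarrow> fls R0 V0 (Es,N) N | F _ \<Rightarrow> True)"
  proof -
    fix i show "?thesis i"
    proof (induction i)
      case (F x)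
      then show ?case by simp
    next
      case (Br N)
      show ?case
      proof (simp, intro allI impI)
        fix Es assume pl: "plug Es N = G"
        show "fls R0 V0 (Es, N) N"
        proof (rule fls.intros)
          show "\<forall>A. F A \<in># N \<longrightarrow> \<not> sat R0 V0 (Es, N) A"
            using truth[OF sat pl] cv_mem by blast
          show "\<forall>D. Br D \<in># N \<longrightarrow> (\<exists>v. R0 (Es, N) v \<and> fls R0 V0 v D)"
          proof (intro allI impI)
            fix D assume D: "Br D \<in># N"
            have pl2: "plug ((N - {#Br D#}) # Es) D = G" using D pl by simp
            have "R0 (Es,N) ((N - {#Br D#}) # Es, D)" unfolding R0_def using D
              by (auto intro!: exI[of _ "[N - {#Br D#}]"])
            moreover have "fls R0 V0 ((N - {#Br D#}) # Es, D) D" using Br.IH[OF D] pl2 by simp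
            ultimately show "\<exists>v. R0 (Es, N) v \<and> fls R0 V0 v D" by blast
          qed
        qed
      qed
    qed
  qed
  from this[of "Br N"] show ?thesis by simp
qed

section \<open>Measure and invariant\<close>

definition isBr :: "item \<Rightarrow> bool" where
  "isBr i = (case i of Br _ \<Rightarrow> True | F _ \<Rightarrow> False)"

lemma isBr_simps[simp]: "isBr (Br D)" "\<not> isBr (F A)"
  by (auto simp: isBr_def)

definition kids :: "sequent \<Rightarrow> nat" where
  "kids N = size (filter_mset isBr N)"

definition Bx :: "fm set \<Rightarrow> fm set" where
  "Bx Cl = {A. Box A \<in> Cl}"

lemma finite_Bx: "finite Cl \<Longrightarrow> finite (Bx Cl)"
proof -
  assume "finite Cl"
  moreover have "Bx Cl = Box -` Cl" by (auto simp: Bx_def)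
  moreover have "inj Box" by (auto simp: inj_def)
  ultimately show ?thesis using finite_vimageI by metis
qed

definition dU :: "sequent \<Rightarrow> fm set" where
  "dU N = {A. F (Dia (neg A)) \<in># N}"

definition covB :: "fm set \<Rightarrow> sequent \<Rightarrow> fm set" where
  "covB Cl N = {A \<in> Bx Cl. \<exists>D. Br D \<in># N \<and> cvS D A}"

inductive inv :: "fm set \<Rightarrow> nat \<Rightarrow> nat \<Rightarrow> nat \<Rightarrow> fm set \<Rightarrow> sequent \<Rightarrow> bool"
  for Cl d0 b0 where
  "(\<forall>X. F X \<in># N \<longrightarrow> X \<in> Cl) \<Longrightarrow> k \<le> d0 + card ((U \<union> dU N) \<inter> Bx Cl)
   \<Longrightarrow> kids N \<le> b0 + card (covB Cl N)
   \<Longrightarrow> (\<forall>D. Br D \<in># N \<longrightarrow> inv Cl d0 b0 (Suc k) (U \<union> dU N) D) \<Longrightarrow> inv Cl d0 b0 k U N"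

lemma inv_iff: "inv Cl d0 b0 k U N \<longleftrightarrow> (\<forall>X. F X \<in># N \<longrightarrow> X \<in> Cl) \<and> k \<le> d0 + card ((U \<union> dU N) \<inter> Bx Cl)
   \<and> kids N \<le> b0 + card (covB Cl N)
   \<and> (\<forall>D. Br D \<in># N \<longrightarrow> inv Cl d0 b0 (Suc k) (U \<union> dU N) D)"
  apply (rule iffI)
   apply (erule inv.cases; simp)
  apply (rule inv.intros; simp)
  done

lemma card_le_Bx: "finite Cl \<Longrightarrow> S \<subseteq> S' \<Longrightarrow> card (S \<inter> Bx Cl) \<le> card (S' \<inter> Bx Cl)"
  by (rule card_mono) (auto simp: finite_Bx)

lemma inv_mono_U: "inv Cl d0 b0 k U N \<Longrightarrow> finite Cl \<Longrightarrow> U \<subseteq> U' \<Longrightarrow> inv Cl d0 b0 k U' N"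
proof (induction arbitrary: U' rule: inv.induct)
  case (1 N k U)
  have c: "card ((U \<union> dU N) \<inter> Bx Cl) \<le> card ((U' \<union> dU N) \<inter> Bx Cl)"
    by (rule card_le_Bx[OF 1(5)]) (use 1(6) in blast)
  have ch: "\<forall>D. Br D \<in># N \<longrightarrow> inv Cl d0 b0 (Suc k) (U' \<union> dU N) D"
  proof (intro allI impI)
    fix D assume D: "Br D \<in># N"
    have "finite Cl \<longrightarrow> (\<forall>x. U \<union> dU N \<subseteq> x \<longrightarrow> inv Cl d0 b0 (Suc k) x D)"
      using 1(4)[rule_format, OF D] by (rule conjunct2)
    then have "\<forall>x. U \<union> dU N \<subseteq> x \<longrightarrow> inv Cl d0 b0 (Suc k) x D" using 1(5) by (rule mp)
    then have "U \<union> dU N \<subseteq> U' \<union> dU N \<longrightarrow> inv Cl d0 b0 (Suc k) (U' \<union> dU N) D" by (rule spec)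
    moreover have "U \<union> dU N \<subseteq> U' \<union> dU N" using 1(6) by blast
    ultimately show "inv Cl d0 b0 (Suc k) (U' \<union> dU N) D" by (rule mp)
  qed
  have k: "k \<le> d0 + card ((U' \<union> dU N) \<inter> Bx Cl)" using 1(2) c by linarith
  show ?case by (rule inv.intros[OF 1(1) k 1(3) ch])
qed

fun zU :: "fm set \<Rightarrow> sequent list \<Rightarrow> fm set" where
  "zU U [] = U"
| "zU U (E # Es) = zU U Es \<union> dU E"

lemma zU_eq: "zU U Es = U \<union> {A. \<exists>E\<in>set Es. F (Dia (neg A)) \<in># E}"
  by (induction Es) (auto simp: dU_def)

lemma dU_Br[simp]: "dU (add_mset (Br D) E) = dU E"
  by (auto simp: dU_def)

lemma inv_plug_node: "inv Cl d0 b0 k U (plug Es N) \<Longrightarrow> inv Cl d0 b0 (k + length Es) (zU U Es) N"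
proof (induction Es arbitrary: N)
  case Nil
  then show ?case by simp
next
  case (Cons E Es)
  have "inv Cl d0 b0 (k + length Es) (zU U Es) (add_mset (Br N) E)" using Cons by simp
  then show ?case by (subst (asm) inv_iff) simp
qed

lemma anc_cl: "inv Cl d0 b0 k U (plug Es N) \<Longrightarrow> E \<in> set Es \<Longrightarrow> F X \<in># E \<Longrightarrow> X \<in> Cl"
proof (induction Es arbitrary: N)
  case Nil
  then show ?case by simp
next
  case (Cons E0 Es)
  show ?case
  proof (cases "E = E0")
    case True
    have "inv Cl d0 b0 (k + length Es) (zU U Es) (add_mset (Br N) E0)"
      using inv_plug_node[of Cl d0 b0 k U Es "add_mset (Br N) E0"] Cons.prems by simp
    then show ?thesis using True Cons.prems by (subst (asm) inv_iff) simp
  next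
    case False
    then show ?thesis using Cons.IH[of "add_mset (Br N) E0"] Cons.prems by simp
  qed
qed

lemma cv_Br_mono:
  assumes m: "\<forall>X. cvS N X \<longrightarrow> cvS N' X"
  shows "cvS (add_mset (Br N) E) X \<Longrightarrow> cvS (add_mset (Br N') E) X"
proof (induction X)
  case (Box A)
  then show ?case using m[rule_format, of A] by auto
qed auto

lemma cv_add: "cvS N X \<Longrightarrow> cvS (N + M) X"
  by (induction X) auto

lemma cv_repl:
  assumes m1: "\<forall>Y. F Y \<in># N \<longrightarrow> cvS N' Y" and m2: "\<forall>D. Br D \<in># N \<longrightarrow> Br D \<in># N'"
  shows "cvS N X \<Longrightarrow> cvS N' X"
proof (induction X)
  case (Atm x)
  then show ?case using m1[rule_format, of "Atm x"] by simp
next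
  case (NAtm x)
  then show ?case using m1[rule_format, of "NAtm x"] by simp
next
  case (And X1 X2)
  then show ?case using m1[rule_format, of "And X1 X2"] by auto
next
  case (Or X1 X2)
  then show ?case using m1[rule_format, of "Or X1 X2"] by auto
next
  case (Box X)
  then show ?case using m2 m1[rule_format, of "Box X"] by (metis cvS.simps(5))
next
  case (Dia X)
  then show ?case using m1[rule_format, of "Dia X"] by simp
qed

lemma covB_Br_mono:
  assumes m: "\<forall>X. cvS N X \<longrightarrow> cvS N' X"
  shows "covB Cl (add_mset (Br N) E) \<subseteq> covB Cl (add_mset (Br N') E)"
proof
  fix A assume "A \<in> covB Cl (add_mset (Br N) E)"
  then obtain D where D: "A \<in> Bx Cl" "Br D \<in># add_mset (Br N) E" "cvS D A"
    unfolding covB_def by blast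
  show "A \<in> covB Cl (add_mset (Br N') E)"
  proof (cases "D = N")
    case True
    then show ?thesis using D m[rule_format, of A] unfolding covB_def by auto
  next
    case False
    then show ?thesis using D unfolding covB_def by auto
  qed
qed

lemma kids_Br[simp]: "kids (add_mset (Br N) E) = Suc (kids E)"
  by (simp add: kids_def)

lemma kids_F[simp]: "kids (add_mset (F A) E) = kids E"
  by (simp add: kids_def)

lemma inv_plug_repl:
  assumes "finite Cl"
  shows "inv Cl d0 b0 k U (plug Es N) \<Longrightarrow> (\<forall>X. cvS N X \<longrightarrow> cvS N' X)
   \<Longrightarrow> (inv Cl d0 b0 (k + length Es) (zU U Es) N \<Longrightarrow> inv Cl d0 b0 (k + length Es) (zU U Es) N')
   \<Longrightarrow> inv Cl d0 b0 k U (plug Es N')"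
proof (induction Es arbitrary: N N')
  case Nil
  then show ?case by simp
next
  case (Cons E Es)
  let ?k = "k + length Es" and ?U = "zU U Es"
  have cv: "\<forall>X. cvS (add_mset (Br N) E) X \<longrightarrow> cvS (add_mset (Br N') E) X"
    using cv_Br_mono[OF Cons.prems(2)] by blast
  have loc: "inv Cl d0 b0 ?k ?U (add_mset (Br N') E)" if h: "inv Cl d0 b0 ?k ?U (add_mset (Br N) E)"
  proof -
    have h': "(\<forall>X. F X \<in># E \<longrightarrow> X \<in> Cl)" "?k \<le> d0 + card ((?U \<union> dU E) \<inter> Bx Cl)"
      "Suc (kids E) \<le> b0 + card (covB Cl (add_mset (Br N) E))"
      "\<forall>D. Br D \<in># E \<longrightarrow> inv Cl d0 b0 (Suc ?k) (?U \<union> dU E) D"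
      "inv Cl d0 b0 (Suc ?k) (?U \<union> dU E) N"
      using iffD1[OF inv_iff h] by simp_all
    have fin: "finite (covB Cl (add_mset (Br N') E))"
      by (rule finite_subset[of _ "Bx Cl"]) (auto simp: covB_def finite_Bx[OF assms])
    have c: "card (covB Cl (add_mset (Br N) E)) \<le> card (covB Cl (add_mset (Br N') E))"
      by (rule card_mono[OF fin covB_Br_mono[OF Cons.prems(2)]])
    have n': "inv Cl d0 b0 (Suc ?k) (?U \<union> dU E) N'"
      using Cons.prems(3) h'(5) by simp
    show ?thesis
    proof (rule inv.intros)
      show "\<forall>X. F X \<in># add_mset (Br N') E \<longrightarrow> X \<in> Cl" using h'(1) by simp
      show "?k \<le> d0 + card ((?U \<union> dU (add_mset (Br N') E)) \<inter> Bx Cl)" using h'(2) by simp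
      show "kids (add_mset (Br N') E) \<le> b0 + card (covB Cl (add_mset (Br N') E))" using h'(3) c by simp
      show "\<forall>D. Br D \<in># add_mset (Br N') E \<longrightarrow> inv Cl d0 b0 (Suc ?k) (?U \<union> dU (add_mset (Br N') E)) D"
        using h'(4) n' by simp
    qed
  qed
  have "inv Cl d0 b0 k U (plug Es (add_mset (Br N) E))" using Cons.prems(1) by simp
  from Cons.IH[OF this cv loc] show ?case by simp
qed


lemma invD:
  assumes "inv Cl d0 b0 k U N"
  shows "\<forall>X. F X \<in># N \<longrightarrow> X \<in> Cl" "k \<le> d0 + card ((U \<union> dU N) \<inter> Bx Cl)"
    "kids N \<le> b0 + card (covB Cl N)" "\<forall>D. Br D \<in># N \<longrightarrow> inv Cl d0 b0 (Suc k) (U \<union> dU N) D"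
  using assms by (cases rule: inv.cases; simp)+

function aszI :: "fm set \<Rightarrow> item \<Rightarrow> nat" where
  "aszI Cl (F A) = 0"
| "aszI Cl (Br D) = Suc (card {X \<in> Cl. cvS D X} + sum_mset (image_mset (aszI Cl) D))"
  by pat_completeness auto
termination
  apply (relation "measure (\<lambda>(Cl,i). size i)")
   apply simp
  apply (simp only: in_measure split_conv)
  apply (drule mem_size_lt[where f=size])
  apply simp
  done

definition asz :: "fm set \<Rightarrow> sequent \<Rightarrow> nat" where
  "asz Cl N = card {X \<in> Cl. cvS N X} + sum_mset (image_mset (aszI Cl) N)"

lemma aszI_Br: "aszI Cl (Br D) = Suc (asz Cl D)"
  by (simp add: asz_def)

declare aszI.simps(2)[simp del]

lemma aszI_nBr: "\<not> isBr i \<Longrightarrow> aszI Cl i = 0"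
  by (cases i) auto

definition rel :: "fm set \<Rightarrow> sequent \<Rightarrow> sequent \<Rightarrow> bool" where
  "rel Cl N N' \<longleftrightarrow> (\<forall>X. cvS N X \<longrightarrow> cvS N' X) \<and> asz Cl N < asz Cl N'"

lemma card_cv_mono: "finite Cl \<Longrightarrow> (\<forall>X. cvS N X \<longrightarrow> cvS N' X) \<Longrightarrow>
   card {X \<in> Cl. cvS N X} \<le> card {X \<in> Cl. cvS N' X}"
  by (rule card_mono) auto

lemma card_cv_strict: "finite Cl \<Longrightarrow> (\<forall>X. cvS N X \<longrightarrow> cvS N' X) \<Longrightarrow> Y \<in> Cl \<Longrightarrow> \<not> cvS N Y \<Longrightarrow> cvS N' Y \<Longrightarrow>
   card {X \<in> Cl. cvS N X} < card {X \<in> Cl. cvS N' X}"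
  by (rule psubset_card_mono) auto

lemma rel_plug: "finite Cl \<Longrightarrow> rel Cl N N' \<Longrightarrow> rel Cl (plug Es N) (plug Es N')"
proof (induction Es arbitrary: N N')
  case Nil
  then show ?case by simp
next
  case (Cons E Es)
  have cv: "\<forall>X. cvS N X \<longrightarrow> cvS N' X" using Cons.prems(2) by (simp add: rel_def)
  have lt: "asz Cl N < asz Cl N'" using Cons.prems(2) by (simp add: rel_def)
  have cv2: "\<forall>X. cvS (add_mset (Br N) E) X \<longrightarrow> cvS (add_mset (Br N') E) X"
    using cv_Br_mono[OF cv] by blast
  have "asz Cl (add_mset (Br N) E) < asz Cl (add_mset (Br N') E)"
    using card_cv_mono[OF Cons.prems(1) cv2] lt unfolding asz_def by (simp add: aszI_Br[unfolded asz_def])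
  then have "rel Cl (add_mset (Br N) E) (add_mset (Br N') E)" using cv2 by (simp add: rel_def)
  then show ?case using Cons.IH[OF Cons.prems(1)] by simp
qed

primrec Hf :: "nat \<Rightarrow> nat \<Rightarrow> nat \<Rightarrow> nat" where
  "Hf c bm 0 = c"
| "Hf c bm (Suc j) = c + bm * Suc (Hf c bm j)"

lemma sum_bound: "(\<forall>i\<in>#N. (isBr i \<longrightarrow> f i \<le> c) \<and> (\<not> isBr i \<longrightarrow> f i = 0)) \<Longrightarrow>
   sum_mset (image_mset f N) \<le> kids N * c"
proof (induction N rule: multiset_induct)
  case empty
  then show ?case by (simp add: kids_def)
next
  case (add x M)
  then show ?case by (cases "isBr x") (auto simp: kids_def)
qed

lemma card_covB: "finite Cl \<Longrightarrow> card (covB Cl N) \<le> card (Bx Cl)"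
  by (rule card_mono) (auto simp: covB_def finite_Bx)

lemma card_int_Bx: "finite Cl \<Longrightarrow> card (S \<inter> Bx Cl) \<le> card (Bx Cl)"
  by (rule card_mono) (auto simp: finite_Bx)

lemma card_cv_Cl: "finite Cl \<Longrightarrow> card {X \<in> Cl. cvS N X} \<le> card Cl"
  by (rule card_mono) auto

lemma bound:
  assumes fin: "finite Cl"
  shows "inv Cl d0 b0 k U N \<Longrightarrow> d0 + card (Bx Cl) - k \<le> j \<Longrightarrow>
    asz Cl N \<le> Hf (card Cl) (b0 + card (Bx Cl)) j"
proof (induction j arbitrary: k U N)
  case 0
  note h = invD[OF 0(1)]
  have nobr: "\<forall>i\<in>#N. \<not> isBr i"
  proof
    fix i assume i: "i \<in># N"
    show "\<not> isBr i"
    proof (cases i)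
      case (Br D)
      then have "inv Cl d0 b0 (Suc k) (U \<union> dU N) D" using h(4) i by blast
      note h2 = invD(2)[OF this]
      have "card ((U \<union> dU N \<union> dU D) \<inter> Bx Cl) \<le> card (Bx Cl)" by (rule card_int_Bx[OF fin])
      then show ?thesis using h2 0(2) by linarith
    qed simp
  qed
  have "sum_mset (image_mset (aszI Cl) N) \<le> kids N * 0"
    by (rule sum_bound) (use nobr aszI_nBr in auto)
  then have "sum_mset (image_mset (aszI Cl) N) \<le> 0" by (simp only: mult_0_right)
  then show ?case using card_cv_Cl[OF fin, of N] unfolding asz_def Hf.simps by linarith
next
  case (Suc j)
  note h = invD[OF Suc.prems(1)]
  have each: "\<forall>i\<in>#N. (isBr i \<longrightarrow> aszI Cl i \<le> Suc (Hf (card Cl) (b0 + card (Bx Cl)) j)) \<and> (\<not> isBr i \<longrightarrow> aszI Cl i = 0)"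
  proof
    fix i assume i: "i \<in># N"
    show "(isBr i \<longrightarrow> aszI Cl i \<le> Suc (Hf (card Cl) (b0 + card (Bx Cl)) j)) \<and> (\<not> isBr i \<longrightarrow> aszI Cl i = 0)"
    proof (cases i)
      case (Br D)
      then have iD: "inv Cl d0 b0 (Suc k) (U \<union> dU N) D" using h(4) i by blast
      have "d0 + card (Bx Cl) - Suc k \<le> j" using Suc.prems(2) by linarith
      then have "asz Cl D \<le> Hf (card Cl) (b0 + card (Bx Cl)) j" using Suc.IH[OF iD] by blast
      then show ?thesis using Br by (simp add: aszI_Br)
    qed simp
  qed
  have "sum_mset (image_mset (aszI Cl) N) \<le> kids N * Suc (Hf (card Cl) (b0 + card (Bx Cl)) j)"
    by (rule sum_bound[OF each])
  moreover have "kids N \<le> b0 + card (Bx Cl)" using h(3) card_covB[OF fin, of N] by linarith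
  ultimately have "sum_mset (image_mset (aszI Cl) N) \<le> (b0 + card (Bx Cl)) * Suc (Hf (card Cl) (b0 + card (Bx Cl)) j)"
    using mult_le_mono1 order.trans by blast
  then show ?case using card_cv_Cl[OF fin, of N] by (simp add: asz_def)
qed


lemma dU_F[simp]: "dU (add_mset (F X) D) = {A. X = Dia (neg A)} \<union> dU D"
  by (auto simp: dU_def)

lemma covB_F[simp]: "covB Cl (add_mset (F X) D) = covB Cl D"
  by (simp add: covB_def)

lemma inv_local_F:
  assumes fin: "finite Cl" and h: "inv Cl d0 b0 k U N" and fm: "\<forall>X. F X \<in># N' \<longrightarrow> X \<in> Cl"
    and du: "dU N \<subseteq> dU N'" and br: "filter_mset isBr N' = filter_mset isBr N"
  shows "inv Cl d0 b0 k U N'"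
proof -
  note hh = invD[OF h]
  have mem: "Br D \<in># N' \<longleftrightarrow> Br D \<in># N" for D
  proof -
    have "Br D \<in># N' \<longleftrightarrow> Br D \<in># filter_mset isBr N'" by simp
    also have "\<dots> \<longleftrightarrow> Br D \<in># filter_mset isBr N" using br by simp
    also have "\<dots> \<longleftrightarrow> Br D \<in># N" by simp
    finally show ?thesis .
  qed
  have kd: "kids N' = kids N" using br by (simp add: kids_def)
  have cb: "covB Cl N' = covB Cl N" using mem by (simp add: covB_def)
  have c: "card ((U \<union> dU N) \<inter> Bx Cl) \<le> card ((U \<union> dU N') \<inter> Bx Cl)"
    by (rule card_le_Bx[OF fin]) (use du in blast)
  have k: "k \<le> d0 + card ((U \<union> dU N') \<inter> Bx Cl)" using hh(2) c by linarith
  have ch: "\<forall>D. Br D \<in># N' \<longrightarrow> inv Cl d0 b0 (Suc k) (U \<union> dU N') D"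
  proof (intro allI impI)
    fix D assume "Br D \<in># N'"
    then have "Br D \<in># N" using mem by blast
    then have "inv Cl d0 b0 (Suc k) (U \<union> dU N) D" using hh(4) by blast
    moreover have "U \<union> dU N \<subseteq> U \<union> dU N'" using du by blast
    ultimately show "inv Cl d0 b0 (Suc k) (U \<union> dU N') D" using inv_mono_U fin by blast
  qed
  have kk: "kids N' \<le> b0 + card (covB Cl N')" using hh(3) kd cb by simp
  show ?thesis by (rule inv.intros[OF fm k kk ch])
qed

lemma inv_local_Box:
  assumes fin: "finite Cl" and h: "inv Cl d0 b0 k U (add_mset (F (Box A)) D)"
    and nu: "A \<notin> U \<union> dU D" and nc: "\<not> (\<exists>D'. Br D' \<in># D \<and> cvS D' A)"
    and cl: "A \<in> Cl" "Dia (neg A) \<in> Cl" "Box A \<in> Cl"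
  shows "inv Cl d0 b0 k U (add_mset (Br {#F (Dia (neg A)), F A#}) D)"
proof -
  let ?M = "{#F (Dia (neg A)), F A#}"
  note hh = invD[OF h]
  have h1: "\<forall>X. F X \<in># D \<longrightarrow> X \<in> Cl" using hh(1) by simp
  have h2: "k \<le> d0 + card ((U \<union> dU D) \<inter> Bx Cl)" using hh(2) by simp
  have h3: "kids D \<le> b0 + card (covB Cl D)" using hh(3) by simp
  have h4: "\<forall>D'. Br D' \<in># D \<longrightarrow> inv Cl d0 b0 (Suc k) (U \<union> dU D) D'" using hh(4) by simp
  have ABx: "A \<in> Bx Cl" using cl(3) by (simp add: Bx_def)
  have fcov: "finite (covB Cl (add_mset (Br ?M) D))"
    by (rule finite_subset[of _ "Bx Cl"]) (auto simp: covB_def finite_Bx[OF fin])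
  have "insert A (covB Cl D) \<subseteq> covB Cl (add_mset (Br ?M) D)"
    using ABx cv_mem[of A "{#F (Dia (neg A)), F A#}"] by (auto simp: covB_def)
  moreover have "A \<notin> covB Cl D" using nc by (simp add: covB_def)
  moreover have "finite (covB Cl D)"
    by (rule finite_subset[of _ "Bx Cl"]) (auto simp: covB_def finite_Bx[OF fin])
  ultimately have "Suc (card (covB Cl D)) \<le> card (covB Cl (add_mset (Br ?M) D))"
    using card_mono[OF fcov] by (metis card_insert_disjoint)
  then have kk: "kids (add_mset (Br ?M) D) \<le> b0 + card (covB Cl (add_mset (Br ?M) D))"
    using h3 by simp
  have fm: "\<forall>X. F X \<in># add_mset (Br ?M) D \<longrightarrow> X \<in> Cl" using h1 by simp
  have k: "k \<le> d0 + card ((U \<union> dU (add_mset (Br ?M) D)) \<inter> Bx Cl)" using h2 by simp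
  have newc: "inv Cl d0 b0 (Suc k) (U \<union> dU D) ?M"
  proof (rule inv.intros)
    show "\<forall>X. F X \<in># ?M \<longrightarrow> X \<in> Cl" using cl by auto
    have AdU: "A \<in> dU ?M" by (simp add: dU_def)
    have fin2: "finite ((U \<union> dU D \<union> dU ?M) \<inter> Bx Cl)"
      by (rule finite_subset[of _ "Bx Cl"]) (auto simp: finite_Bx[OF fin])
    have "insert A ((U \<union> dU D) \<inter> Bx Cl) \<subseteq> (U \<union> dU D \<union> dU ?M) \<inter> Bx Cl"
      using AdU ABx by blast
    then have "card (insert A ((U \<union> dU D) \<inter> Bx Cl)) \<le> card ((U \<union> dU D \<union> dU ?M) \<inter> Bx Cl)"
      by (rule card_mono[OF fin2])
    moreover have "card (insert A ((U \<union> dU D) \<inter> Bx Cl)) = Suc (card ((U \<union> dU D) \<inter> Bx Cl))"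
      using nu by (intro card_insert_disjoint) (auto simp: finite_Bx[OF fin])
    ultimately show "Suc k \<le> d0 + card ((U \<union> dU D \<union> dU ?M) \<inter> Bx Cl)" using h2 by linarith
    show "kids ?M \<le> b0 + card (covB Cl ?M)" by (simp add: kids_def)
    show "\<forall>D'. Br D' \<in># ?M \<longrightarrow> inv Cl d0 b0 (Suc (Suc k)) (U \<union> dU D \<union> dU ?M) D'" by simp
  qed
  have ch: "\<forall>D'. Br D' \<in># add_mset (Br ?M) D \<longrightarrow> inv Cl d0 b0 (Suc k) (U \<union> dU (add_mset (Br ?M) D)) D'"
  proof (intro allI impI)
    fix D' assume "Br D' \<in># add_mset (Br ?M) D"
    then have "D' = ?M \<or> Br D' \<in># D" by auto
    then show "inv Cl d0 b0 (Suc k) (U \<union> dU (add_mset (Br ?M) D)) D'"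
    proof
      assume "D' = ?M" then show ?thesis using newc by simp
    next
      assume "Br D' \<in># D" then show ?thesis using h4 by simp
    qed
  qed
  show ?thesis by (rule inv.intros[OF fm k kk ch])
qed

lemma box_blocked:
  assumes "A \<in> zU {} Es \<union> dU D"
  shows "deriv c (plug Es (add_mset (Br {#F (Dia (neg A)), F A#}) D))"
proof -
  have "\<exists>E\<in>set (D # Es). F (Dia (neg A)) \<in># E" using assms by (auto simp: zU_eq dU_def)
  then obtain E where E: "E \<in> set (D # Es)" "F (Dia (neg A)) \<in># E" by blast
  have "deriv c (fill (toctx (D # Es) {#F (Dia (neg A))#}) {#F A, F (neg A)#})" by (rule genid)
  then have "deriv c (plug (D # Es) ({#F (Dia (neg A)), F A#} + {#F (neg A)#}))"
    by (simp add: add_mset_commute)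
  then have "deriv c (plug (D # Es) {#F (Dia (neg A)), F A#})" by (rule dia_push[OF E])
  then show ?thesis by simp
qed


definition cl_ok :: "fm set \<Rightarrow> bool" where
  "cl_ok Cl \<longleftrightarrow> finite Cl \<and> (\<forall>A B. And A B \<in> Cl \<longrightarrow> A \<in> Cl \<and> B \<in> Cl)
    \<and> (\<forall>A B. Or A B \<in> Cl \<longrightarrow> A \<in> Cl \<and> B \<in> Cl)
    \<and> (\<forall>A. Box A \<in> Cl \<longrightarrow> A \<in> Cl \<and> Dia (neg A) \<in> Cl) \<and> (\<forall>A. Dia A \<in> Cl \<longrightarrow> A \<in> Cl)"

lemma cl_fin: "cl_ok Cl \<Longrightarrow> finite Cl" unfolding cl_ok_def by blast
lemma cl_And: "cl_ok Cl \<Longrightarrow> And A B \<in> Cl \<Longrightarrow> A \<in> Cl \<and> B \<in> Cl" unfolding cl_ok_def by blast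
lemma cl_Or: "cl_ok Cl \<Longrightarrow> Or A B \<in> Cl \<Longrightarrow> A \<in> Cl \<and> B \<in> Cl" unfolding cl_ok_def by blast
lemma cl_Box: "cl_ok Cl \<Longrightarrow> Box A \<in> Cl \<Longrightarrow> A \<in> Cl \<and> Dia (neg A) \<in> Cl" unfolding cl_ok_def by blast
lemma cl_Dia: "cl_ok Cl \<Longrightarrow> Dia A \<in> Cl \<Longrightarrow> A \<in> Cl" unfolding cl_ok_def by blast

lemma sum_aszI_F[simp]: "sum_mset (image_mset (aszI Cl) (add_mset (F A) D)) = sum_mset (image_mset (aszI Cl) D)"
  by simp

lemma progress:
  assumes clok: "cl_ok Cl" and invG: "inv Cl d0 b0 0 {} (plug Es N)"
    and nd: "\<not> deriv False (plug Es N)" and bad: "\<not> nodeOK Es N"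
  shows "\<exists>N'. \<not> deriv False (plug Es N') \<and> rel Cl N N' \<and> inv Cl d0 b0 (length Es) (zU {} Es) N'
     \<and> (\<forall>w. fls R0 V0 w N' \<longrightarrow> fls R0 V0 w N)"
proof -
  have fin: "finite Cl" using cl_fin[OF clok] .
  have invN: "inv Cl d0 b0 (length Es) (zU {} Es) N" using inv_plug_node[OF invG] by simp
  have fmN: "\<forall>X. F X \<in># N \<longrightarrow> X \<in> Cl" using invD(1)[OF invN] .
  from bad consider (a) "\<exists>X. F X \<in># N \<and> \<not> scv N X" | (b) "\<exists>a. F (Atm a) \<in># N \<and> F (NAtm a) \<in># N"
    | (c) "\<exists>E B. E \<in> set Es \<and> F (Dia B) \<in># E \<and> \<not> cvS N B" unfolding nodeOK_def by blast
  then show ?thesis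
  proof cases
    case b
    then obtain a where a: "F (Atm a) \<in># N" "F (NAtm a) \<in># N" by blast
    then obtain D1 where D1: "N = add_mset (F (Atm a)) D1" by (metis multi_member_split)
    then have "F (NAtm a) \<in># D1" using a(2) by simp
    then obtain D where D: "D1 = add_mset (F (NAtm a)) D" by (metis multi_member_split)
    have "deriv False (fill (toctx Es D) {#F (NAtm a), F (Atm a)#})" by (rule idR)
    then have "deriv False (plug Es N)" using D1 D by (simp add: add_mset_commute)
    then show ?thesis using nd by blast
  next
    case c
    then obtain E B where EB: "E \<in> set Es" "F (Dia B) \<in># E" "\<not> cvS N B" by blast
    let ?N' = "add_mset (F B) N"
    have "Dia B \<in> Cl" using anc_cl[OF invG EB(1,2)] .
    then have BCl: "B \<in> Cl" using cl_Dia[OF clok] by blast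
    have nd': "\<not> deriv False (plug Es ?N')"
    proof
      assume "deriv False (plug Es ?N')"
      then have "deriv False (plug Es (N + {#F B#}))" by simp
      then have "deriv False (plug Es N)" by (rule dia_push[OF EB(1,2)])
      then show False using nd by blast
    qed
    have cv: "\<forall>X. cvS N X \<longrightarrow> cvS ?N' X" using cv_add[of N _ "{#F B#}"] by simp
    have "card {X \<in> Cl. cvS N X} < card {X \<in> Cl. cvS ?N' X}"
      by (rule card_cv_strict[OF fin cv BCl EB(3)]) (simp add: cv_mem)
    then have "rel Cl N ?N'" using cv by (simp add: rel_def asz_def)
    moreover have "inv Cl d0 b0 (length Es) (zU {} Es) ?N'"
      by (rule inv_local_F[OF fin invN]) (use fmN BCl in auto)
    moreover have "\<forall>w. fls R0 V0 w ?N' \<longrightarrow> fls R0 V0 w N" by simp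
    ultimately show ?thesis using nd' by (intro exI[of _ ?N']) simp
  next
    case a
    then obtain X where X: "F X \<in># N" "\<not> scv N X" by blast
    then obtain D where N: "N = add_mset (F X) D" by (metis multi_member_split)
    have XCl: "X \<in> Cl" using fmN X(1) by blast
    have fmD: "\<forall>Y. F Y \<in># D \<longrightarrow> Y \<in> Cl" using fmN N by simp
    show ?thesis
    proof (cases X)
      case (And A B)
      have ncv: "\<not> cvS N A" "\<not> cvS N B" using X(2) And by (auto simp: scv_def)
      have "\<not> deriv False (plug Es (add_mset (F A) D)) \<or> \<not> deriv False (plug Es (add_mset (F B) D))"
      proof (rule ccontr)
        assume "\<not> ?thesis"
        then have "deriv False (fill (toctx Es D) {#F A#})" "deriv False (fill (toctx Es D) {#F B#})" by simp_all
        then have "deriv False (fill (toctx Es D) {#F (And A B)#})" by (rule andR)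
        then show False using nd N And by simp
      qed
      then obtain C where C: "C = A \<or> C = B" "\<not> deriv False (plug Es (add_mset (F C) D))" by blast
      let ?N' = "add_mset (F C) D"
      have CCl: "C \<in> Cl" using XCl And C(1) cl_And[OF clok] by blast
      have ncC: "\<not> cvS N C" using ncv C(1) by blast
      have cv: "\<forall>Y. cvS N Y \<longrightarrow> cvS ?N' Y"
      proof (intro allI impI)
        fix Y assume "cvS N Y"
        moreover have "\<forall>Y. F Y \<in># N \<longrightarrow> cvS ?N' Y"
          using C(1) And N by (auto intro: cv_mem)
        moreover have "\<forall>D'. Br D' \<in># N \<longrightarrow> Br D' \<in># ?N'" using N by simp
        ultimately show "cvS ?N' Y" using cv_repl by blast
      qed
      have "card {X \<in> Cl. cvS N X} < card {X \<in> Cl. cvS ?N' X}"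
        by (rule card_cv_strict[OF fin cv CCl ncC]) (simp add: cv_mem)
      then have "rel Cl N ?N'" using cv N by (simp add: rel_def asz_def)
      moreover have "inv Cl d0 b0 (length Es) (zU {} Es) ?N'"
        by (rule inv_local_F[OF fin invN]) (use fmD CCl N And in auto)
      moreover have "\<forall>w. fls R0 V0 w ?N' \<longrightarrow> fls R0 V0 w N" using N And C(1) by auto
      ultimately show ?thesis using C(2) by (intro exI[of _ ?N']) simp
    next
      case (Or A B)
      have ncv: "\<not> cvS N A \<or> \<not> cvS N B" using X(2) Or by (auto simp: scv_def)
      let ?N' = "add_mset (F A) (add_mset (F B) D)"
      have nd': "\<not> deriv False (plug Es ?N')"
      proof
        assume "deriv False (plug Es ?N')"
        then have "deriv False (fill (toctx Es D) {#F A, F B#})" by (simp add: add_mset_commute)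
        then have "deriv False (fill (toctx Es D) {#F (Or A B)#})" by (rule orR)
        then show False using nd N Or by simp
      qed
      obtain C where C: "C = A \<or> C = B" "\<not> cvS N C" using ncv by blast
      have CCl: "C \<in> Cl" using XCl Or C(1) cl_Or[OF clok] by blast
      have cAB: "cvS ?N' A" "cvS ?N' B" by (simp_all add: cv_mem)
      have cv: "\<forall>Y. cvS N Y \<longrightarrow> cvS ?N' Y"
      proof (intro allI impI)
        fix Y assume "cvS N Y"
        moreover have "\<forall>Y. F Y \<in># N \<longrightarrow> cvS ?N' Y"
        proof (intro allI impI)
          fix Y assume "F Y \<in># N"
          then have "Y = Or A B \<or> F Y \<in># D" using N Or by simp
          then show "cvS ?N' Y"
          proof
            assume "Y = Or A B" then show ?thesis using cAB by simp
          next
            assume "F Y \<in># D" then show ?thesis by (simp add: cv_mem)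
          qed
        qed
        moreover have "\<forall>D'. Br D' \<in># N \<longrightarrow> Br D' \<in># ?N'" using N by simp
        ultimately show "cvS ?N' Y" using cv_repl by blast
      qed
      have "card {X \<in> Cl. cvS N X} < card {X \<in> Cl. cvS ?N' X}"
        by (rule card_cv_strict[OF fin cv CCl C(2)]) (use C(1) cAB in blast)
      then have "rel Cl N ?N'" using cv N by (simp add: rel_def asz_def)
      moreover have "inv Cl d0 b0 (length Es) (zU {} Es) ?N'"
      proof (rule inv_local_F[OF fin invN])
        have "A \<in> Cl \<and> B \<in> Cl" using XCl Or cl_Or[OF clok] by blast
        then show "\<forall>X. F X \<in># ?N' \<longrightarrow> X \<in> Cl" using fmD by auto
      next
        show "dU N \<subseteq> dU ?N'" using N Or by auto
      next
        show "filter_mset isBr ?N' = filter_mset isBr N" using N by simp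
      qed
      moreover have "\<forall>w. fls R0 V0 w ?N' \<longrightarrow> fls R0 V0 w N" using N Or by simp
      ultimately show ?thesis using nd' by (intro exI[of _ ?N']) simp
    next
      case (Box A)
      have ncv: "\<not> (\<exists>D'. Br D' \<in># N \<and> cvS D' A)" using X(2) Box by (auto simp: scv_def)
      have ncvD: "\<not> (\<exists>D'. Br D' \<in># D \<and> cvS D' A)" using ncv N by auto
      let ?M = "{#F (Dia (neg A)), F A#}"
      let ?N' = "add_mset (Br ?M) D"
      have nd': "\<not> deriv False (plug Es ?N')"
      proof
        assume "deriv False (plug Es ?N')"
        then have "deriv False (fill (toctx Es D) {#Br ?M#})" by simp
        then have "deriv False (fill (toctx Es D) {#F (Box A)#})" by (rule boxR)
        then show False using nd N Box by simp
      qed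
      have nu: "A \<notin> zU {} Es \<union> dU D" using box_blocked[of A Es D False] nd' by blast
      have cl: "A \<in> Cl" "Dia (neg A) \<in> Cl" "Box A \<in> Cl" using XCl Box cl_Box[OF clok] by auto
      have cv: "\<forall>Y. cvS N Y \<longrightarrow> cvS ?N' Y"
      proof (intro allI impI)
        fix Y assume "cvS N Y"
        moreover have "\<forall>Y. F Y \<in># N \<longrightarrow> cvS ?N' Y"
          using Box N cv_mem[of A ?M] by (auto intro: cv_mem)
        moreover have "\<forall>D'. Br D' \<in># N \<longrightarrow> Br D' \<in># ?N'" using N by simp
        ultimately show "cvS ?N' Y" using cv_repl by blast
      qed
      have "asz Cl N < asz Cl ?N'"
        using card_cv_mono[OF fin cv] N Box unfolding asz_def by (simp add: aszI_Br)
      then have "rel Cl N ?N'" using cv by (simp add: rel_def)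
      moreover have "inv Cl d0 b0 (length Es) (zU {} Es) ?N'"
        by (rule inv_local_Box[OF fin _ nu ncvD cl]) (use invN N Box in simp)
      moreover have "\<forall>w. fls R0 V0 w ?N' \<longrightarrow> fls R0 V0 w N" using N Box by auto
      ultimately show ?thesis using nd' by (intro exI[of _ ?N']) simp
    qed (use X(2) in \<open>auto simp: scv_def\<close>)
  qed
qed


section \<open>Completeness of the cut-free calculus\<close>

lemma fls_plug: "(\<forall>w. fls R V w N' \<longrightarrow> fls R V w N) \<Longrightarrow> fls R V w (plug Es N') \<Longrightarrow> fls R V w (plug Es N)"
proof (induction Es arbitrary: N N' w)
  case Nil
  then show ?case by simp
next
  case (Cons E Es)
  have "\<forall>w. fls R V w (add_mset (Br N') E) \<longrightarrow> fls R V w (add_mset (Br N) E)"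
    using Cons.prems(1) by auto
  then show ?case using Cons.IH[of "add_mset (Br N') E" "add_mset (Br N) E"] Cons.prems(2) by simp
qed

lemma complete_aux:
  assumes clok: "cl_ok Cl"
  shows "inv Cl d0 b0 0 {} G \<Longrightarrow> \<not> deriv False G \<Longrightarrow> \<exists>w. fls R0 V0 w G"
proof (induction "Hf (card Cl) (b0 + card (Bx Cl)) (d0 + card (Bx Cl)) - asz Cl G" arbitrary: G rule: less_induct)
  case less
  have fin: "finite Cl" using cl_fin[OF clok] .
  show ?case
  proof (cases "saturated G")
    case True
    have "fls R0 V0 ([], G) G" using sat_root[OF True, of G] by simp
    then show ?thesis by blast
  next
    case False
    then obtain Es N where pl: "plug Es N = G" "\<not> nodeOK Es N" unfolding saturated_def by blast
    have invG: "inv Cl d0 b0 0 {} (plug Es N)" using less.prems(1) pl(1) by simp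
    have nd: "\<not> deriv False (plug Es N)" using less.prems(2) pl(1) by simp
    obtain N' where N': "\<not> deriv False (plug Es N')" "rel Cl N N'" "inv Cl d0 b0 (length Es) (zU {} Es) N'"
      "\<forall>w. fls R0 V0 w N' \<longrightarrow> fls R0 V0 w N"
      using progress[OF clok invG nd pl(2)] by blast
    have cv: "\<forall>X. cvS N X \<longrightarrow> cvS N' X" using N'(2) by (simp add: rel_def)
    have inv': "inv Cl d0 b0 0 {} (plug Es N')"
      by (rule inv_plug_repl[OF fin invG cv]) (use N'(3) in simp)
    have lt: "asz Cl G < asz Cl (plug Es N')"
      using rel_plug[OF fin N'(2), of Es] pl(1) by (simp add: rel_def)
    have le: "asz Cl (plug Es N') \<le> Hf (card Cl) (b0 + card (Bx Cl)) (d0 + card (Bx Cl))"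
      by (rule bound[OF fin inv']) simp
    have "Hf (card Cl) (b0 + card (Bx Cl)) (d0 + card (Bx Cl)) - asz Cl (plug Es N')
        < Hf (card Cl) (b0 + card (Bx Cl)) (d0 + card (Bx Cl)) - asz Cl G" using lt le by linarith
    from less.hyps[OF this inv' N'(1)] obtain w where "fls R0 V0 w (plug Es N')" by blast
    then have "fls R0 V0 w (plug Es N)" by (rule fls_plug[OF N'(4)])
    then show ?thesis using pl(1) by blast
  qed
qed

inductive bnd :: "nat \<Rightarrow> nat \<Rightarrow> fm set \<Rightarrow> sequent \<Rightarrow> bool" where
  "(\<forall>X. F X \<in># N \<longrightarrow> X \<in> S) \<Longrightarrow> kids N \<le> b \<Longrightarrow> (\<forall>D. Br D \<in># N \<longrightarrow> 0 < d \<and> bnd (d - 1) b S D)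
   \<Longrightarrow> bnd d b S N"

lemma bnd_mono: "bnd d b S N \<Longrightarrow> d \<le> d' \<Longrightarrow> b \<le> b' \<Longrightarrow> S \<subseteq> S' \<Longrightarrow> bnd d' b' S' N"
proof (induction arbitrary: d' rule: bnd.induct)
  case (1 N S b d)
  have a: "\<forall>X. F X \<in># N \<longrightarrow> X \<in> S'" using 1(1) 1(6) by blast
  have k: "kids N \<le> b'" using 1(2) 1(5) by linarith
  have c: "\<forall>D. Br D \<in># N \<longrightarrow> 0 < d' \<and> bnd (d' - 1) b' S' D"
  proof (intro allI impI)
    fix D assume D: "Br D \<in># N"
    have h: "0 < d \<and> (\<forall>x. d - 1 \<le> x \<longrightarrow> b \<le> b' \<longrightarrow> S \<subseteq> S' \<longrightarrow> bnd x b' S' D)"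
      using 1(3)[rule_format, OF D] by blast
    have "d - 1 \<le> d' - 1" using 1(4) by linarith
    then have "bnd (d' - 1) b' S' D" using h 1(5) 1(6) by blast
    moreover have "0 < d'" using h 1(4) by linarith
    ultimately show "0 < d' \<and> bnd (d' - 1) b' S' D" by blast
  qed
  show ?case by (rule bnd.intros[OF a k c])
qed

lemma bnd_ex: "\<exists>d b S. finite S \<and> bnd d b S N"
proof -
  have "\<And>i. (case i of Br N \<Rightarrow> \<exists>d b S. finite S \<and> bnd d b S N | F _ \<Rightarrow> True)"
  proof -
    fix i show "?thesis i"
    proof (induction i)
      case (F x)
      then show ?case by simp
    next
      case (Br N)
      let ?Ch = "{D. Br D \<in># N}"
      have finCh: "finite ?Ch"
      proof -
        have "Br ` ?Ch \<subseteq> set_mset N" by auto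
        then have "finite (Br ` ?Ch)" by (rule finite_subset) simp
        then show ?thesis by (rule finite_imageD) (auto simp: inj_on_def)
      qed
      have "\<forall>D\<in>?Ch. \<exists>t. finite (snd (snd t)) \<and> bnd (fst t) (fst (snd t)) (snd (snd t)) D"
      proof
        fix D assume "D \<in> ?Ch"
        then have "\<exists>d b S. finite S \<and> bnd d b S D" using Br.IH[of "Br D"] by simp
        then show "\<exists>t. finite (snd (snd t)) \<and> bnd (fst t) (fst (snd t)) (snd (snd t)) D" by auto
      qed
      then obtain f where f: "\<forall>D\<in>?Ch. finite (snd (snd (f D))) \<and> bnd (fst (f D)) (fst (snd (f D))) (snd (snd (f D))) D"
        by (metis bchoice)
      define d where "d = Suc (\<Sum>D\<in>?Ch. fst (f D))"
      define b where "b = kids N + (\<Sum>D\<in>?Ch. fst (snd (f D)))"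
      define S where "S = {X. F X \<in># N} \<union> (\<Union>D\<in>?Ch. snd (snd (f D)))"
      have finS: "finite S"
      proof -
        have "F ` {X. F X \<in># N} \<subseteq> set_mset N" by auto
        then have "finite (F ` {X. F X \<in># N})" by (rule finite_subset) simp
        then have "finite {X. F X \<in># N}" by (rule finite_imageD) (auto simp: inj_on_def)
        then show ?thesis unfolding S_def using finCh f by auto
      qed
      have "bnd d b S N"
      proof (rule bnd.intros)
        show "\<forall>X. F X \<in># N \<longrightarrow> X \<in> S" by (auto simp: S_def)
        show "kids N \<le> b" by (simp add: b_def)
        show "\<forall>D. Br D \<in># N \<longrightarrow> 0 < d \<and> bnd (d - 1) b S D"
        proof (intro allI impI conjI)
          fix D assume D: "Br D \<in># N"
          then have DC: "D \<in> ?Ch" by simp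
          show "0 < d" by (simp add: d_def)
          have "fst (f D) \<le> d - 1" unfolding d_def using member_le_sum[OF DC _ finCh, of "\<lambda>D. fst (f D)"] by simp
          moreover have "fst (snd (f D)) \<le> b" unfolding b_def using member_le_sum[OF DC _ finCh, of "\<lambda>D. fst (snd (f D))"] by simp
          moreover have "snd (snd (f D)) \<subseteq> S" unfolding S_def using DC by blast
          moreover have "bnd (fst (f D)) (fst (snd (f D))) (snd (snd (f D))) D" using f DC by blast
          ultimately show "bnd (d - 1) b S D" using bnd_mono by blast
        qed
      qed
      then show ?case using finS by auto
    qed
  qed
  from this[of "Br N"] show ?thesis by simp
qed

lemma inv_init: "bnd d b S N \<Longrightarrow> S \<subseteq> Cl \<Longrightarrow> k + d \<le> d0 \<Longrightarrow> b \<le> b0 \<Longrightarrow> inv Cl d0 b0 k U N"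
proof (induction arbitrary: k U rule: bnd.induct)
  case (1 N S b d)
  have a: "\<forall>X. F X \<in># N \<longrightarrow> X \<in> Cl" using 1(1) 1(4) by blast
  have k: "k \<le> d0 + card ((U \<union> dU N) \<inter> Bx Cl)" using 1(5) by linarith
  have kk: "kids N \<le> b0 + card (covB Cl N)" using 1(2) 1(6) by linarith
  have c: "\<forall>D. Br D \<in># N \<longrightarrow> inv Cl d0 b0 (Suc k) (U \<union> dU N) D"
  proof (intro allI impI)
    fix D assume D: "Br D \<in># N"
    have h: "0 < d \<and> (\<forall>x xa. S \<subseteq> Cl \<longrightarrow> x + (d - 1) \<le> d0 \<longrightarrow> b \<le> b0 \<longrightarrow> inv Cl d0 b0 x xa D)"
      using 1(3)[rule_format, OF D] by blast
    then have "Suc k + (d - 1) \<le> d0" using 1(5) by linarith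
    then show "inv Cl d0 b0 (Suc k) (U \<union> dU N) D" using h 1(4) 1(6) by blast
  qed
  show ?case by (rule inv.intros[OF a k kk c])
qed


section \<open>Closure\<close>

primrec sub :: "fm \<Rightarrow> fm set" where
  "sub (Atm a) = {Atm a}"
| "sub (NAtm a) = {NAtm a}"
| "sub (And A B) = insert (And A B) (sub A \<union> sub B)"
| "sub (Or A B) = insert (Or A B) (sub A \<union> sub B)"
| "sub (Box A) = insert (Box A) (sub A)"
| "sub (Dia A) = insert (Dia A) (sub A)"

lemma finite_sub: "finite (sub A)"
  by (induction A) auto

lemma sub_refl: "A \<in> sub A"
  by (cases A) auto

lemma sub_trans: "X \<in> sub A \<Longrightarrow> sub X \<subseteq> sub A"
  by (induction A) auto

definition subs :: "fm set \<Rightarrow> fm set" where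
  "subs S = (\<Union>A\<in>S. sub A)"

definition ClOf :: "fm set \<Rightarrow> fm set" where
  "ClOf S = subs S \<union> neg ` subs S"

lemma sub_comp:
  "And A B \<in> sub Y \<Longrightarrow> A \<in> sub Y \<and> B \<in> sub Y"
  "Or A B \<in> sub Y \<Longrightarrow> A \<in> sub Y \<and> B \<in> sub Y"
  "Box A \<in> sub Y \<Longrightarrow> A \<in> sub Y"
  "Dia A \<in> sub Y \<Longrightarrow> A \<in> sub Y"
proof -
  show "And A B \<in> sub Y \<Longrightarrow> A \<in> sub Y \<and> B \<in> sub Y"
  proof -
    assume h: "And A B \<in> sub Y"
    have "A \<in> sub (And A B)" "B \<in> sub (And A B)" using sub_refl[of A] sub_refl[of B] by simp_all
    then show ?thesis using sub_trans[OF h] by blast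
  qed
  show "Or A B \<in> sub Y \<Longrightarrow> A \<in> sub Y \<and> B \<in> sub Y"
  proof -
    assume h: "Or A B \<in> sub Y"
    have "A \<in> sub (Or A B)" "B \<in> sub (Or A B)" using sub_refl[of A] sub_refl[of B] by simp_all
    then show ?thesis using sub_trans[OF h] by blast
  qed
  show "Box A \<in> sub Y \<Longrightarrow> A \<in> sub Y"
  proof -
    assume h: "Box A \<in> sub Y"
    have "A \<in> sub (Box A)" using sub_refl[of A] by simp
    then show ?thesis using sub_trans[OF h] by blast
  qed
  show "Dia A \<in> sub Y \<Longrightarrow> A \<in> sub Y"
  proof -
    assume h: "Dia A \<in> sub Y"
    have "A \<in> sub (Dia A)" using sub_refl[of A] by simp
    then show ?thesis using sub_trans[OF h] by blast
  qed
qed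

lemma subsI: "Y \<in> S \<Longrightarrow> X \<in> sub Y \<Longrightarrow> X \<in> subs S"
  unfolding subs_def by (rule UN_I)

lemma subsE: "X \<in> subs S \<Longrightarrow> (\<And>Y. Y \<in> S \<Longrightarrow> X \<in> sub Y \<Longrightarrow> P) \<Longrightarrow> P"
  unfolding subs_def by (erule UN_E)

lemma subs_comp:
  "And A B \<in> subs S \<Longrightarrow> A \<in> subs S \<and> B \<in> subs S"
  "Or A B \<in> subs S \<Longrightarrow> A \<in> subs S \<and> B \<in> subs S"
  "Box A \<in> subs S \<Longrightarrow> A \<in> subs S"
  "Dia A \<in> subs S \<Longrightarrow> A \<in> subs S"
     apply (erule subsE, drule sub_comp(1), metis subsI)
    apply (erule subsE, drule sub_comp(2), metis subsI)
   apply (erule subsE, drule sub_comp(3), metis subsI)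
  apply (erule subsE, drule sub_comp(4), metis subsI)
  done

lemma inClOf: "X \<in> ClOf S \<longleftrightarrow> X \<in> subs S \<or> neg X \<in> subs S"
proof
  assume "X \<in> ClOf S"
  then have "X \<in> subs S \<or> (\<exists>Y\<in>subs S. X = neg Y)" unfolding ClOf_def by blast
  then show "X \<in> subs S \<or> neg X \<in> subs S" by auto
next
  assume "X \<in> subs S \<or> neg X \<in> subs S"
  moreover have "neg X \<in> subs S \<Longrightarrow> X \<in> neg ` subs S" using neg_neg[of X] by (metis imageI)
  ultimately show "X \<in> ClOf S" unfolding ClOf_def by blast
qed

lemma cl_ok_ClOf: "finite S \<Longrightarrow> cl_ok (ClOf S)"
proof -
  assume fin: "finite S"
  have c1: "A \<in> ClOf S \<and> B \<in> ClOf S" if "And A B \<in> ClOf S" for A B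
  proof -
    from that have "And A B \<in> subs S \<or> Or (neg A) (neg B) \<in> subs S" unfolding inClOf by simp
    then show ?thesis
    proof
      assume "And A B \<in> subs S" then show ?thesis using subs_comp(1) inClOf by blast
    next
      assume "Or (neg A) (neg B) \<in> subs S" then show ?thesis using subs_comp(2) inClOf by blast
    qed
  qed
  have c2: "A \<in> ClOf S \<and> B \<in> ClOf S" if "Or A B \<in> ClOf S" for A B
  proof -
    from that have "Or A B \<in> subs S \<or> And (neg A) (neg B) \<in> subs S" unfolding inClOf by simp
    then show ?thesis
    proof
      assume "Or A B \<in> subs S" then show ?thesis using subs_comp(2) inClOf by blast
    next
      assume "And (neg A) (neg B) \<in> subs S" then show ?thesis using subs_comp(1) inClOf by blast
    qed
  qed
  have c3: "A \<in> ClOf S \<and> Dia (neg A) \<in> ClOf S" if "Box A \<in> ClOf S" for A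
  proof -
    from that have "Box A \<in> subs S \<or> Dia (neg A) \<in> subs S" unfolding inClOf by simp
    then show ?thesis
    proof
      assume h: "Box A \<in> subs S"
      then have "A \<in> subs S" using subs_comp(3) by blast
      moreover have "neg (Dia (neg A)) \<in> subs S" using h by simp
      ultimately show ?thesis using inClOf by blast
    next
      assume h: "Dia (neg A) \<in> subs S"
      then have "neg A \<in> subs S" using subs_comp(4) by blast
      then show ?thesis using h inClOf by blast
    qed
  qed
  have c4: "A \<in> ClOf S" if "Dia A \<in> ClOf S" for A
  proof -
    from that have "Dia A \<in> subs S \<or> Box (neg A) \<in> subs S" unfolding inClOf by simp
    then show ?thesis
    proof
      assume "Dia A \<in> subs S" then show ?thesis using subs_comp(4) inClOf by blast
    next
      assume "Box (neg A) \<in> subs S" then show ?thesis using subs_comp(3) inClOf by blast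
    qed
  qed
  have "finite (subs S)" unfolding subs_def using fin finite_sub by blast
  then have "finite (ClOf S)" unfolding ClOf_def by blast
  then show ?thesis unfolding cl_ok_def using c1 c2 c3 c4 by blast
qed

lemma S_ClOf: "S \<subseteq> ClOf S"
proof
  fix x assume "x \<in> S"
  then have "x \<in> subs S" using subsI sub_refl by metis
  then show "x \<in> ClOf S" unfolding ClOf_def by (rule UnI1)
qed

theorem mainTheorem12:
  fixes \<Gamma> :: sequent
  assumes "derivable_with_cut \<Gamma>"
  shows "derivable_cut_free \<Gamma>"
proof (rule ccontr)
  assume nd: "\<not> derivable_cut_free \<Gamma>"
  obtain d b S where S: "finite S" "bnd d b S \<Gamma>" using bnd_ex by blast
  have clok: "cl_ok (ClOf S)" by (rule cl_ok_ClOf[OF S(1)])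
  have "inv (ClOf S) d b 0 {} \<Gamma>" by (rule inv_init[OF S(2) S_ClOf]) simp_all
  from complete_aux[OF clok this nd] obtain w where "fls R0 V0 w \<Gamma>" by blast
  moreover have "\<not> fls R0 V0 w \<Gamma>" by (rule soundness[OF assms GL_R0])
  ultimately show False by blast
qed

end
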